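(* Let $A$ be an $n\times m$ matrix with entries in $\{0,1,-1\}$, $n\ge 2$. (i) If each column of $A$ has at most two nonzero entries, then for each $B\in\mathcal{Q}_0(A^t)$, $AB$ and $(AB)^{[2]}$ are $P_0$-matrices, and $AB$ is positive semistable. (ii) If each row of $A$ has at most two nonzero entries, then for each $B\in\mathcal{Q}_0(A^t)$, $AB$ is positive semistable.
   Context: For $M\in\mathbb{R}^{n\times m}$, $\mathcal{Q}(M)$ is the set of real matrices with the same entrywise sign pattern as $M$, and $\mathcal{Q}_0(M)$ its closure. A square real matrix is a $P_0$-matrix if all principal minors are nonnegative, and positive semistable if all eigenvalues have nonnegative real part. $M^{[2]}$ denotes the second additive compound of $M\in\mathbb{R}^{n\times n}$: the matrix of $u\wedge v\mapsto Mu\wedge v+u\wedge Mv$ on $\Lambda^2\mathbb{R}^n$ in the lexicographically ordered basis $e_i\wedge e_j$, $i<j$. *)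

theory Defs
  imports "Jordan_Normal_Form.Char_Poly" "Jordan_Normal_Form.DL_Submatrix"
begin

definition in_Q0 :: "real mat \<Rightarrow> real mat \<Rightarrow> bool" where
  "in_Q0 B M \<longleftrightarrow> dim_row B = dim_row M \<and> dim_col B = dim_col M \<and>
     (\<forall>i < dim_row M. \<forall>j < dim_col M.
        sgn (B $$ (i,j)) \<in> {0, sgn (M $$ (i,j))})"

definition P0_matrix :: "real mat \<Rightarrow> bool" where
  "P0_matrix M \<longleftrightarrow> dim_row M = dim_col M \<and>
     (\<forall>I \<subseteq> {0..<dim_row M}. det (submatrix M I I) \<ge> 0)"

definition pos_semistable :: "real mat \<Rightarrow> bool" where
  "pos_semistable M \<longleftrightarrow> dim_row M = dim_col M \<and>
     (\<forall>z. eigenvalue (map_mat complex_of_real M) z \<longrightarrow> Re z \<ge> 0)"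

text \<open>Index pairs (i,j), i<j<n, in lexicographic order (basis e_i wedge e_j).\<close>
definition wedge_pairs :: "nat \<Rightarrow> (nat \<times> nat) list" where
  "wedge_pairs n = concat (map (\<lambda>i. map (\<lambda>j. (i,j)) [Suc i..<n]) [0..<n])"

text \<open>Second additive compound: matrix of u wedge v \<mapsto> Mu wedge v + u wedge Mv.
  Entry at row (i,j), column (k,l) is the coefficient of e_i wedge e_j in
  M e_k wedge e_l + e_k wedge M e_l.\<close>
definition compound2 :: "real mat \<Rightarrow> real mat" where
  "compound2 M = (let ps = wedge_pairs (dim_row M) in
     mat (length ps) (length ps) (\<lambda>(a,b).
       (case ps ! a of (i,j) \<Rightarrow> case ps ! b of (k,l) \<Rightarrow>
          (if l = j then M $$ (i,k) else 0) - (if l = i then M $$ (j,k) else 0)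
        + (if k = i then M $$ (j,l) else 0) - (if k = j then M $$ (i,l) else 0))))"

end

theory Submission
  imports Defs
begin


lemma gershgorin_det_nz:
  fixes M :: "real mat"
  assumes M: "M \<in> carrier_mat n n"
    and dd: "\<And>i. i < n \<Longrightarrow> (\<Sum>j\<in>{0..<n}-{i}. \<bar>M $$ (i,j)\<bar>) < \<bar>M $$ (i,i)\<bar>"
  shows "det M \<noteq> 0"
proof
  assume "det M = 0"
  then obtain v where v: "v \<in> carrier_vec n" "v \<noteq> 0\<^sub>v n" "M *\<^sub>v v = 0\<^sub>v n"
    using det_0_iff_vec_prod_zero_field[OF M] by auto
  have "n \<noteq> 0" using v by auto
  define f where "f = (\<lambda>j. \<bar>v $ j\<bar>)"
  have fin: "finite (f ` {0..<n})" "f ` {0..<n} \<noteq> {}" using \<open>n \<noteq> 0\<close> by auto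
  obtain i where i: "i < n" "f i = Max (f ` {0..<n})" using Max_in[OF fin] by auto
  have mx: "\<And>j. j < n \<Longrightarrow> \<bar>v $ j\<bar> \<le> \<bar>v $ i\<bar>"
    using Max_ge[OF fin(1)] i unfolding f_def by auto
  have vi: "v $ i \<noteq> 0"
  proof
    assume "v $ i = 0"
    then have "\<And>j. j < n \<Longrightarrow> v $ j = 0" using mx by force
    then have "v = 0\<^sub>v n" using v(1) by (intro eq_vecI) auto
    with v(2) show False by simp
  qed
  have "(M *\<^sub>v v) $ i = 0" using v(3) i by simp
  then have row0: "(\<Sum>j\<in>{0..<n}. M $$ (i,j) * v $ j) = 0"
    using M v(1) i by (simp add: scalar_prod_def)
  have split: "(\<Sum>j\<in>{0..<n}. M $$ (i,j) * v $ j) = M $$ (i,i) * v $ i + (\<Sum>j\<in>{0..<n}-{i}. M $$ (i,j) * v $ j)"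
    using i by (subst sum.remove[of _ i]) auto
  have "\<bar>M $$ (i,i) * v $ i\<bar> = \<bar>\<Sum>j\<in>{0..<n}-{i}. M $$ (i,j) * v $ j\<bar>"
    using row0 split by linarith
  also have "\<dots> \<le> (\<Sum>j\<in>{0..<n}-{i}. \<bar>M $$ (i,j) * v $ j\<bar>)" by (rule sum_abs)
  also have "\<dots> \<le> (\<Sum>j\<in>{0..<n}-{i}. \<bar>M $$ (i,j)\<bar> * \<bar>v $ i\<bar>)"
    by (rule sum_mono) (auto simp: abs_mult intro!: mult_left_mono mx)
  also have "\<dots> = (\<Sum>j\<in>{0..<n}-{i}. \<bar>M $$ (i,j)\<bar>) * \<bar>v $ i\<bar>" by (simp add: sum_distrib_right)
  also have "\<dots> < \<bar>M $$ (i,i)\<bar> * \<bar>v $ i\<bar>"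
    using dd[OF i(1)] vi by (intro mult_strict_right_mono) auto
  finally show False by (simp add: abs_mult)
qed

lemma diag_dom_det:
  fixes R :: "real mat"
  assumes R: "R \<in> carrier_mat n n"
    and dd: "\<And>i. i < n \<Longrightarrow> (\<Sum>j\<in>{0..<n}-{i}. \<bar>R $$ (i,j)\<bar>) \<le> \<bar>R $$ (i,i)\<bar>"
  shows "(\<Prod>i\<in>{0..<n}. R $$ (i,i)) * det R \<ge> 0"
proof (cases "(\<Prod>i\<in>{0..<n}. R $$ (i,i)) = 0")
  case True then show ?thesis by (metis mult_zero_left order_refl)
next
  case False
  define c where "c = (\<Prod>i\<in>{0..<n}. R $$ (i,i))"
  have diag: "\<And>i. i < n \<Longrightarrow> R $$ (i,i) \<noteq> 0" using False by auto
  define Rs where "Rs = (\<lambda>s::real. mat n n (\<lambda>(i,j). if i = j then R $$ (i,j) else s * R $$ (i,j)))"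
  have Rs_c: "Rs s \<in> carrier_mat n n" for s unfolding Rs_def by auto
  have nz: "det (Rs s) \<noteq> 0" if "0 \<le> s" "s < 1" for s
  proof (rule gershgorin_det_nz[OF Rs_c])
    fix i assume i: "i < n"
    have "(\<Sum>j\<in>{0..<n}-{i}. \<bar>Rs s $$ (i,j)\<bar>) = (\<Sum>j\<in>{0..<n}-{i}. s * \<bar>R $$ (i,j)\<bar>)"
      using i that by (intro sum.cong) (auto simp: Rs_def abs_mult)
    also have "\<dots> = s * (\<Sum>j\<in>{0..<n}-{i}. \<bar>R $$ (i,j)\<bar>)" by (simp add: sum_distrib_left)
    also have "\<dots> \<le> s * \<bar>R $$ (i,i)\<bar>" using dd[OF i] that by (intro mult_left_mono) auto
    also have "\<dots> < \<bar>R $$ (i,i)\<bar>" using diag[OF i] that by auto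
    also have "\<dots> = \<bar>Rs s $$ (i,i)\<bar>" using i by (simp add: Rs_def)
    finally show "(\<Sum>j\<in>{0..<n}-{i}. \<bar>Rs s $$ (i,j)\<bar>) < \<bar>Rs s $$ (i,i)\<bar>" .
  qed
  have R1: "Rs 1 = R" using R unfolding Rs_def by (intro eq_matI) auto
  have "det (Rs 0) = prod_list (diag_mat (Rs 0))"
    by (rule det_upper_triangular[OF _ Rs_c]) (auto simp: Rs_def upper_triangular_def)
  also have "\<dots> = (\<Prod>i\<in>{0..<n}. Rs 0 $$ (i,i))"
    using prod.distinct_set_conv_list[of "[0..<n]" "\<lambda>i. Rs 0 $$ (i,i)"] Rs_c[of 0]
    by (simp add: diag_mat_def)
  also have "\<dots> = c" unfolding c_def by (intro prod.cong) (auto simp: Rs_def)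
  finally have R0: "det (Rs 0) = c" .
  define g where "g = (\<lambda>s. c * det (Rs s))"
  have g_eq: "g s = c * (\<Sum>p\<in>{p. p permutes {0..<n}}. of_int (sign p) *
        (\<Prod>i\<in>{0..<n}. (if i = p i then R $$ (i, p i) else s * R $$ (i, p i))))" for s
    unfolding g_def det_def'[OF Rs_c]
    apply (intro arg_cong[where f="\<lambda>x. c * x"] sum.cong refl arg_cong[where f="\<lambda>x. _ * x"] prod.cong)
    apply (auto simp: Rs_def permutes_in_image)
    done
  have cont: "isCont g s" for s
    unfolding g_eq[abs_def] apply (intro continuous_intros)
    subgoal for p i by (cases "i = p i") (auto intro!: continuous_intros)
    done
  show ?thesis
  proof (rule ccontr)
    assume "\<not> 0 \<le> (\<Prod>i\<in>{0..<n}. R $$ (i,i)) * det R"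
    moreover have "g 1 = c * det R" by (simp add: g_def R1)
    ultimately have g1: "g 1 \<le> 0" "g 1 \<noteq> 0" unfolding c_def by linarith+
    have g0: "0 \<le> g 0" unfolding g_def R0 by simp
    obtain x where x: "0 \<le> x" "x \<le> 1" "g x = 0"
      using IVT2[of g 1 0 0] g1 g0 cont by auto
    have "x \<noteq> 1" using x g1 by auto
    then have "det (Rs x) \<noteq> 0" using nz x by auto
    with x(3) False show False unfolding g_def c_def by simp
  qed
qed



definition FF :: "nat \<Rightarrow> nat \<Rightarrow> (nat \<Rightarrow> nat) set" where
  "FF p q = {f. (\<forall>i\<in>{0..<p}. f i \<in> {0..<q}) \<and> (\<forall>i. i \<notin> {0..<p} \<longrightarrow> f i = i)}"

lemma FF_finite: "finite (FF p q)"
  unfolding FF_def by (rule finite_bounded_functions) auto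

lemma det_mult_expand:
  fixes X Y :: "real mat"
  assumes X: "X \<in> carrier_mat p q" and Y: "Y \<in> carrier_mat q p"
  shows "det (X * Y) = (\<Sum>f\<in>FF p q. (\<Prod>i\<in>{0..<p}. Y $$ (f i, i)) * det (mat\<^sub>r p p (\<lambda>i. col X (f i))))"
proof -
  have XY: "X * Y \<in> carrier_mat p p" using X Y by auto
  have YT: "transpose_mat Y \<in> carrier_mat p q" and XT: "transpose_mat X \<in> carrier_mat q p" using X Y by auto
  have "det (X * Y) = det (transpose_mat (X * Y))" by (rule det_transpose[OF XY, symmetric])
  also have "transpose_mat (X * Y) = transpose_mat Y * transpose_mat X" by (rule transpose_mult[OF X Y])
  also have "\<dots> = mat\<^sub>r p p (\<lambda>i. finsum_vec TYPE(real) p (\<lambda>k. transpose_mat Y $$ (i,k) \<cdot>\<^sub>v row (transpose_mat X) k) {0..<q})"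
    by (rule mat_mul_finsum_alt[OF YT XT])
  also have "det \<dots> = (\<Sum>f\<in>FF p q. det (mat\<^sub>r p p (\<lambda>i. transpose_mat Y $$ (i, f i) \<cdot>\<^sub>v row (transpose_mat X) (f i))))"
    unfolding FF_def
    by (rule det_linear_rows_sum) (use XT in auto)
  also have "\<dots> = (\<Sum>f\<in>FF p q. (\<Prod>i\<in>{0..<p}. Y $$ (f i, i)) * det (mat\<^sub>r p p (\<lambda>i. col X (f i))))"
  proof (rule sum.cong[OF refl])
    fix f assume f: "f \<in> FF p q"
    have fi: "\<And>i. i < p \<Longrightarrow> f i < q" using f unfolding FF_def by auto
    have "det (mat\<^sub>r p p (\<lambda>i. transpose_mat Y $$ (i, f i) \<cdot>\<^sub>v row (transpose_mat X) (f i))) =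
      prod (\<lambda>i. transpose_mat Y $$ (i, f i)) {0..<p} * det (mat\<^sub>r p p (\<lambda>i. row (transpose_mat X) (f i)))"
      by (rule det_rows_mul) (use X fi in \<open>intro Pi_I, subst row_transpose, auto\<close>)
    also have "prod (\<lambda>i. transpose_mat Y $$ (i, f i)) {0..<p} = (\<Prod>i\<in>{0..<p}. Y $$ (f i, i))"
      using Y fi by (intro prod.cong) auto
    also have "mat\<^sub>r p p (\<lambda>i. row (transpose_mat X) (f i)) = mat\<^sub>r p p (\<lambda>i. col X (f i))"
      using X fi by (intro eq_matI) auto
    finally show "det (mat\<^sub>r p p (\<lambda>i. transpose_mat Y $$ (i, f i) \<cdot>\<^sub>v row (transpose_mat X) (f i))) =
      (\<Prod>i\<in>{0..<p}. Y $$ (f i, i)) * det (mat\<^sub>r p p (\<lambda>i. col X (f i)))" .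
  qed
  finally show ?thesis .
qed

definition HH :: "real mat \<Rightarrow> real mat \<Rightarrow> nat \<Rightarrow> nat \<Rightarrow> bool" where
  "HH X Y p q \<longleftrightarrow> X \<in> carrier_mat p q \<and> Y \<in> carrier_mat q p \<and>
     (\<forall>i<p. \<forall>k<q. X $$ (i,k) \<in> {0,1,-1}) \<and>
     (\<forall>k<q. card {i. i<p \<and> X $$ (i,k) \<noteq> 0} \<le> 2) \<and>
     (\<forall>k<q. \<forall>i<p. sgn (Y $$ (k,i)) \<in> {0, sgn (X $$ (i,k))})"

lemma HH_term_nonneg:
  assumes H: "HH X Y p q" and f: "f \<in> FF p q"
  shows "(\<Prod>i\<in>{0..<p}. Y $$ (f i, i)) * det (mat\<^sub>r p p (\<lambda>i. col X (f i))) \<ge> 0"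
proof -
  have X: "X \<in> carrier_mat p q" and Y: "Y \<in> carrier_mat q p"
    and ent: "\<And>i k. i<p \<Longrightarrow> k<q \<Longrightarrow> X $$ (i,k) \<in> {0,1,-1}"
    and cnt: "\<And>k. k<q \<Longrightarrow> card {i. i<p \<and> X $$ (i,k) \<noteq> 0} \<le> 2"
    and sg: "\<And>k i. k<q \<Longrightarrow> i<p \<Longrightarrow> sgn (Y $$ (k,i)) \<in> {0, sgn (X $$ (i,k))}"
    using H unfolding HH_def by auto
  have fi: "\<And>i. i < p \<Longrightarrow> f i < q" using f unfolding FF_def by auto
  define R where "R = mat\<^sub>r p p (\<lambda>i. col X (f i))"
  have R: "R \<in> carrier_mat p p" unfolding R_def by auto
  have Rij: "\<And>i j. i < p \<Longrightarrow> j < p \<Longrightarrow> R $$ (i,j) = X $$ (j, f i)"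
    unfolding R_def using X fi by auto
  show ?thesis
  proof (cases "\<exists>i<p. Y $$ (f i, i) = 0")
    case True
    then have "(\<Prod>i\<in>{0..<p}. Y $$ (f i, i)) = 0" by (metis atLeastLessThan_iff finite_atLeastLessThan le0 prod_zero_iff)
    then show ?thesis by (metis mult_zero_left order_refl)
  next
    case False
    have Xd: "X $$ (i, f i) \<in> {1,-1}" and Yd: "Y $$ (f i, i) = \<bar>Y $$ (f i, i)\<bar> * X $$ (i, f i)"
      if i: "i < p" for i
    proof -
      have "Y $$ (f i, i) \<noteq> 0" using False i by auto
      moreover have "sgn (Y $$ (f i, i)) \<in> {0, sgn (X $$ (i, f i))}" using sg fi i by auto
      moreover have "X $$ (i, f i) \<in> {0,1,-1}" using ent fi i by auto
      ultimately have s: "sgn (Y $$ (f i, i)) = sgn (X $$ (i, f i))" "X $$ (i, f i) \<in> {0,1,-1}"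
        by (auto simp: sgn_eq_0_iff)
      then consider "X $$ (i, f i) = 0" | "X $$ (i, f i) = 1" | "X $$ (i, f i) = -1" by auto
      then show "X $$ (i, f i) \<in> {1,-1}" "Y $$ (f i, i) = \<bar>Y $$ (f i, i)\<bar> * X $$ (i, f i)"
        using s(1) \<open>Y $$ (f i, i) \<noteq> 0\<close> by (cases; auto simp: sgn_if split: if_splits)+
    qed
    have prodY: "(\<Prod>i\<in>{0..<p}. Y $$ (f i, i)) = (\<Prod>i\<in>{0..<p}. \<bar>Y $$ (f i, i)\<bar>) * (\<Prod>i\<in>{0..<p}. R $$ (i,i))"
      unfolding prod.distrib[symmetric] by (intro prod.cong) (auto simp: Rij intro: Yd)
    have dd: "(\<Sum>j\<in>{0..<p}-{i}. \<bar>R $$ (i,j)\<bar>) \<le> \<bar>R $$ (i,i)\<bar>" if i: "i < p" for i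
    proof -
      define k where "k = f i"
      have k: "k < q" using fi i k_def by auto
      define S where "S = {j. j<p \<and> X $$ (j,k) \<noteq> 0}"
      have "(\<Sum>j\<in>{0..<p}-{i}. \<bar>R $$ (i,j)\<bar>) = (\<Sum>j\<in>{0..<p}-{i}. \<bar>X $$ (j,k)\<bar>)"
        using i by (intro sum.cong) (auto simp: Rij k_def)
      also have "\<dots> = (\<Sum>j\<in>S-{i}. \<bar>X $$ (j,k)\<bar>)"
        by (rule sum.mono_neutral_right) (auto simp: S_def)
      also have "\<dots> = (\<Sum>j\<in>S-{i}. 1)"
      proof (intro sum.cong refl)
        fix j assume "j \<in> S - {i}"
        then have "X $$ (j,k) \<in> {0,1,-1}" "X $$ (j,k) \<noteq> 0" using ent k by (auto simp: S_def)
        then show "\<bar>X $$ (j,k)\<bar> = 1" by auto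
      qed
      also have "\<dots> = real (card (S - {i}))" by simp
      also have "card (S - {i}) = card S - 1"
        using Xd[OF i] i by (intro card_Diff_singleton) (auto simp: S_def k_def)
      also have "real (card S - 1) \<le> 1" using cnt[OF k] unfolding S_def by linarith
      also have "1 = \<bar>R $$ (i,i)\<bar>" using Xd[OF i] i Rij by auto
      finally show ?thesis .
    qed
    have "(\<Prod>i\<in>{0..<p}. R $$ (i,i)) * det R \<ge> 0" by (rule diag_dom_det[OF R dd])
    moreover have "0 \<le> (\<Prod>i\<in>{0..<p}. \<bar>Y $$ (f i, i)\<bar>)" by (intro prod_nonneg) auto
    ultimately show ?thesis unfolding R_def[symmetric] prodY
      by (simp add: mult.assoc)
  qed
qed

lemma HH_det_nonneg:
  assumes H: "HH X Y p q"
  shows "det (X * Y) \<ge> 0"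
proof -
  have X: "X \<in> carrier_mat p q" and Y: "Y \<in> carrier_mat q p" using H unfolding HH_def by auto
  show ?thesis unfolding det_mult_expand[OF X Y]
    by (rule sum_nonneg) (rule HH_term_nonneg[OF H])
qed



lemma HH_P0:
  assumes H: "HH X Y p q"
  shows "P0_matrix (X * Y)"
proof -
  have X: "X \<in> carrier_mat p q" and Y: "Y \<in> carrier_mat q p"
    and ent: "\<And>i k. i<p \<Longrightarrow> k<q \<Longrightarrow> X $$ (i,k) \<in> {0,1,-1}"
    and cnt: "\<And>k. k<q \<Longrightarrow> card {i. i<p \<and> X $$ (i,k) \<noteq> 0} \<le> 2"
    and sg: "\<And>k i. k<q \<Longrightarrow> i<p \<Longrightarrow> sgn (Y $$ (k,i)) \<in> {0, sgn (X $$ (i,k))}"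
    using H unfolding HH_def by auto
  have "det (submatrix (X * Y) I I) \<ge> 0" if I: "I \<subseteq> {0..<p}" for I
  proof -
    have cI: "{i. i < p \<and> i \<in> I} = I" using I by auto
    define r where "r = card I"
    have pl: "pick I i < p" if "i < r" for i
      using pick_le[of i p I] that cI unfolding r_def by auto
    have inj: "inj_on (pick I) {0..<r}"
    proof (rule inj_onI)
      fix a b assume a: "a \<in> {0..<r}" and b: "b \<in> {0..<r}" and e: "pick I a = pick I b"
      show "a = b"
      proof (rule ccontr)
        assume "a \<noteq> b"
        then have "a < b \<or> b < a" by auto
        then have "pick I a \<noteq> pick I b" using a b pick_mono[of _ I] unfolding r_def
          by (metis atLeastLessThan_iff less_irrefl)
        with e show False by simp
      qed
    qed
    define X' where "X' = mat r q (\<lambda>(i,k). X $$ (pick I i, k))"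
    define Y' where "Y' = mat q r (\<lambda>(k,j). Y $$ (k, pick I j))"
    have sub: "submatrix (X * Y) I I = X' * Y'"
    proof (rule eq_matI)
      show "dim_row (submatrix (X * Y) I I) = dim_row (X' * Y')"
        using X by (simp add: dim_submatrix cI X'_def r_def)
      show "dim_col (submatrix (X * Y) I I) = dim_col (X' * Y')"
        using X Y by (simp add: dim_submatrix cI Y'_def r_def)
      fix i j assume i: "i < dim_row (X' * Y')" and j: "j < dim_col (X' * Y')"
      then have i': "i < r" and j': "j < r" by (auto simp: X'_def Y'_def)
      have "submatrix (X * Y) I I $$ (i,j) = (X * Y) $$ (pick I i, pick I j)"
        using X Y i' j' by (intro submatrix_index) (auto simp: cI r_def)
      also have "\<dots> = (\<Sum>k\<in>{0..<q}. X $$ (pick I i, k) * Y $$ (k, pick I j))"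
        using X Y pl[OF i'] pl[OF j'] by (simp add: scalar_prod_def)
      also have "\<dots> = (X' * Y') $$ (i,j)"
        using i' j' by (simp add: X'_def Y'_def scalar_prod_def)
      finally show "submatrix (X * Y) I I $$ (i,j) = (X' * Y') $$ (i,j)" .
    qed
    have "HH X' Y' r q"
      unfolding HH_def
    proof (intro conjI allI impI)
      show "X' \<in> carrier_mat r q" "Y' \<in> carrier_mat q r" by (auto simp: X'_def Y'_def)
      fix i k assume "i < r" "k < q"
      then show "X' $$ (i,k) \<in> {0,1,-1}" using ent pl by (auto simp: X'_def)
    next
      fix k i assume "k < q" "i < r"
      then show "sgn (Y' $$ (k,i)) \<in> {0, sgn (X' $$ (i,k))}" using sg pl by (auto simp: X'_def Y'_def)
    next
      fix k assume k: "k < q"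
      have "card {i. i < r \<and> X' $$ (i,k) \<noteq> 0} \<le> card {i. i<p \<and> X $$ (i,k) \<noteq> 0}"
      proof (rule card_inj_on_le[of "pick I"])
        show "inj_on (pick I) {i. i < r \<and> X' $$ (i,k) \<noteq> 0}" using inj by (rule inj_on_subset) auto
        show "pick I ` {i. i < r \<and> X' $$ (i,k) \<noteq> 0} \<subseteq> {i. i<p \<and> X $$ (i,k) \<noteq> 0}"
          using pl k by (auto simp: X'_def)
      qed auto
      then show "card {i. i < r \<and> X' $$ (i,k) \<noteq> 0} \<le> 2" using cnt[OF k] by linarith
    qed
    then show ?thesis unfolding sub by (rule HH_det_nonneg)
  qed
  then show ?thesis unfolding P0_matrix_def using X Y by auto
qed

lemma HH_shift_pos:
  assumes H: "HH X Y p q" and t: "t > 0"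
  shows "det (X * Y + t \<cdot>\<^sub>m 1\<^sub>m p) > 0"
proof -
  have X: "X \<in> carrier_mat p q" and Y: "Y \<in> carrier_mat q p"
    and ent: "\<And>i k. i<p \<Longrightarrow> k<q \<Longrightarrow> X $$ (i,k) \<in> {0,1,-1}"
    and cnt: "\<And>k. k<q \<Longrightarrow> card {i. i<p \<and> X $$ (i,k) \<noteq> 0} \<le> 2"
    and sg: "\<And>k i. k<q \<Longrightarrow> i<p \<Longrightarrow> sgn (Y $$ (k,i)) \<in> {0, sgn (X $$ (i,k))}"
    using H unfolding HH_def by auto
  define X' where "X' = mat p (q+p) (\<lambda>(i,k). if k < q then X $$ (i,k) else if k - q = i then 1 else 0)"
  define Y' where "Y' = mat (q+p) p (\<lambda>(k,j). if k < q then Y $$ (k,j) else if k - q = j then t else 0)"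
  have X'c: "X' \<in> carrier_mat p (q+p)" and Y'c: "Y' \<in> carrier_mat (q+p) p" by (auto simp: X'_def Y'_def)
  have H': "HH X' Y' p (q+p)"
    unfolding HH_def
  proof (intro conjI allI impI X'c Y'c)
    fix i k assume "i < p" "k < q + p"
    then show "X' $$ (i,k) \<in> {0,1,-1}" using ent by (auto simp: X'_def)
  next
    fix k i assume "k < q + p" "i < p"
    then show "sgn (Y' $$ (k,i)) \<in> {0, sgn (X' $$ (i,k))}" using sg t by (auto simp: X'_def Y'_def)
  next
    fix k assume k: "k < q + p"
    show "card {i. i < p \<and> X' $$ (i,k) \<noteq> 0} \<le> 2"
    proof (cases "k < q")
      case True
      then have "{i. i < p \<and> X' $$ (i,k) \<noteq> 0} = {i. i<p \<and> X $$ (i,k) \<noteq> 0}" by (auto simp: X'_def)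
      then show ?thesis using cnt[OF True] by simp
    next
      case False
      then have "{i. i < p \<and> X' $$ (i,k) \<noteq> 0} \<subseteq> {k - q}" using k by (auto simp: X'_def split: if_splits)
      then have "card {i. i < p \<and> X' $$ (i,k) \<noteq> 0} \<le> card {k - q}" by (intro card_mono) auto
      then show ?thesis by simp
    qed
  qed
  have prod: "X' * Y' = X * Y + t \<cdot>\<^sub>m 1\<^sub>m p"
  proof (rule eq_matI)
    fix i j assume i: "i < dim_row (X * Y + t \<cdot>\<^sub>m 1\<^sub>m p)" and j: "j < dim_col (X * Y + t \<cdot>\<^sub>m 1\<^sub>m p)"
    then have i: "i < p" and j: "j < p" using X Y by auto
    have "(X' * Y') $$ (i,j) = (\<Sum>k\<in>{0..<q+p}. X' $$ (i,k) * Y' $$ (k,j))"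
      using i j by (simp add: X'_def Y'_def scalar_prod_def)
    also have "\<dots> = (\<Sum>k\<in>{0..<q}. X' $$ (i,k) * Y' $$ (k,j)) + (\<Sum>k\<in>{q..<q+p}. X' $$ (i,k) * Y' $$ (k,j))"
      by (rule sum.atLeastLessThan_concat[symmetric]) auto
    also have "(\<Sum>k\<in>{0..<q}. X' $$ (i,k) * Y' $$ (k,j)) = (\<Sum>k\<in>{0..<q}. X $$ (i,k) * Y $$ (k,j))"
      using i j by (intro sum.cong) (auto simp: X'_def Y'_def)
    also have "(\<Sum>k\<in>{q..<q+p}. X' $$ (i,k) * Y' $$ (k,j)) = (\<Sum>k\<in>{0..<p}. X' $$ (i,k+q) * Y' $$ (k+q,j))"
      using sum.shift_bounds_nat_ivl[of "\<lambda>k. X' $$ (i,k) * Y' $$ (k,j)" 0 q p] by (simp add: add.commute)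
    also have "\<dots> = (\<Sum>k\<in>{0..<p}. if k = i \<and> k = j then t else 0)"
      using i j by (intro sum.cong) (auto simp: X'_def Y'_def)
    also have "\<dots> = (if i = j then t else 0)"
      using i by (cases "i = j") (auto simp: sum.If_cases)
    finally show "(X' * Y') $$ (i,j) = (X * Y + t \<cdot>\<^sub>m 1\<^sub>m p) $$ (i,j)"
      using i j X Y by (simp add: scalar_prod_def)
  qed (use X Y in \<open>auto simp: X'_def Y'_def\<close>)
  define f0 where "f0 = (\<lambda>i::nat. if i < p then q + i else i)"
  have f0: "f0 \<in> FF p (q+p)" unfolding FF_def f0_def by auto
  let ?term = "\<lambda>f. (\<Prod>i\<in>{0..<p}. Y' $$ (f i, i)) * det (mat\<^sub>r p p (\<lambda>i. col X' (f i)))"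
  have "?term f0 \<le> (\<Sum>f\<in>FF p (q+p). ?term f)"
    by (rule member_le_sum[OF f0 HH_term_nonneg[OF H'] FF_finite]) auto
  also have "\<dots> = det (X' * Y')" by (rule det_mult_expand[OF X'c Y'c, symmetric])
  also have "?term f0 = t ^ p"
  proof -
    have "(\<Prod>i\<in>{0..<p}. Y' $$ (f0 i, i)) = (\<Prod>i\<in>{0..<p}. t)"
      by (intro prod.cong) (auto simp: Y'_def f0_def)
    moreover have "mat\<^sub>r p p (\<lambda>i. col X' (f0 i)) = 1\<^sub>m p"
      by (intro eq_matI) (auto simp: X'_def f0_def)
    ultimately show ?thesis by simp
  qed
  finally show ?thesis unfolding prod using t by (smt (verit) zero_less_power)
qed



lemma set_wedge_pairs: "set (wedge_pairs n) = {(i,j). i < j \<and> j < n}"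
proof
  show "set (wedge_pairs n) \<subseteq> {(i,j). i < j \<and> j < n}" unfolding wedge_pairs_def by auto
  show "{(i,j). i < j \<and> j < n} \<subseteq> set (wedge_pairs n)"
  proof
    fix x assume "x \<in> {(i,j). i < j \<and> j < n}"
    then obtain a b where x: "x = (a,b)" "a < b" "b < n" by auto
    show "x \<in> set (wedge_pairs n)" unfolding wedge_pairs_def x
      using x by force
  qed
qed

lemma distinct_wedge_pairs: "distinct (wedge_pairs n)"
  unfolding wedge_pairs_def
proof (rule distinct_concat)
  let ?g = "\<lambda>i. map (\<lambda>j. (i,j)) [Suc i..<n]"
  show "distinct (map ?g [0..<n])"
    unfolding distinct_map
  proof
    show "inj_on ?g (set [0..<n])"
    proof (rule inj_onI)
      fix a b assume a: "a \<in> set [0..<n]" and b: "b \<in> set [0..<n]" and e: "?g a = ?g b"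
      show "a = b"
      proof (cases "Suc a < n")
        case True
        then have "(a, Suc a) \<in> set (?g a)" by auto
        then have "(a, Suc a) \<in> set (?g b)" using e by simp
        then show ?thesis by auto
      next
        case False
        then have "?g a = []" by simp
        then have "?g b = []" using e by simp
        then have "\<not> Suc b < n" by auto
        with False a b show ?thesis by auto
      qed
    qed
  qed simp
  show "\<And>ys. ys \<in> set (map ?g [0..<n]) \<Longrightarrow> distinct ys" by (auto simp: distinct_map inj_on_def)
  show "\<And>ys zs. ys \<in> set (map ?g [0..<n]) \<Longrightarrow> zs \<in> set (map ?g [0..<n]) \<Longrightarrow> ys \<noteq> zs \<Longrightarrow> set ys \<inter> set zs = {}"
    by auto
qed

lemma wedge_pairs_nth:
  assumes "a < length (wedge_pairs n)"
  shows "fst (wedge_pairs n ! a) < snd (wedge_pairs n ! a)" "snd (wedge_pairs n ! a) < n"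
proof -
  have "wedge_pairs n ! a \<in> set (wedge_pairs n)" using assms by simp
  then show "fst (wedge_pairs n ! a) < snd (wedge_pairs n ! a)" "snd (wedge_pairs n ! a) < n"
    unfolding set_wedge_pairs by auto
qed

lemma sum_nth_distinct:
  assumes "distinct xs"
  shows "(\<Sum>a\<in>{0..<length xs}. h (xs ! a)) = (\<Sum>x\<in>set xs. h x)"
proof -
  have inj: "inj_on (nth xs) {0..<length xs}" using assms by (auto simp: inj_on_def nth_eq_iff_index_eq)
  have img: "nth xs ` {0..<length xs} = set xs" by (auto simp: in_set_conv_nth)
  show ?thesis using sum.reindex[OF inj, of h] unfolding img by (simp add: comp_def)
qed

lemma card_nth_distinct:
  assumes "distinct xs"
  shows "card {a. a < length xs \<and> P (xs ! a)} = card {x\<in>set xs. P x}"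
proof -
  have inj: "inj_on (nth xs) {a. a < length xs \<and> P (xs ! a)}" using assms by (auto simp: inj_on_def nth_eq_iff_index_eq)
  have img: "nth xs ` {a. a < length xs \<and> P (xs ! a)} = {x\<in>set xs. P x}" by (auto simp: in_set_conv_nth)
  show ?thesis using card_image[OF inj] unfolding img by simp
qed

lemma sum_prod_index:
  fixes q n :: nat
  shows "(\<Sum>c\<in>{0..<q*n}. g c) = (\<Sum>k\<in>{0..<q}. \<Sum>l\<in>{0..<n}. g (k*n + l))"
proof (induction q)
  case 0 then show ?case by simp
next
  case (Suc q)
  have "(\<Sum>c\<in>{0..<Suc q*n}. g c) = (\<Sum>c\<in>{0..<q*n}. g c) + (\<Sum>c\<in>{q*n..<q*n+n}. g c)"
  proof -
    have e: "Suc q * n = q * n + n" by simp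
    show ?thesis unfolding e by (rule sum.atLeastLessThan_concat[symmetric]) auto
  qed
  also have "(\<Sum>c\<in>{q*n..<q*n+n}. g c) = (\<Sum>l\<in>{0..<n}. g (q*n + l))"
    using sum.shift_bounds_nat_ivl[of g 0 "q*n" n] by (simp add: add.commute)
  finally show ?case using Suc by simp
qed

lemma sum_ifif:
  fixes a b :: real and j n l' :: nat
  assumes "j < n"
  shows "(\<Sum>l\<in>{0..<n}. (if j = l then a else 0) * (if l' = l then b else 0)) = (if l' = j then a * b else 0)"
proof -
  have "(\<Sum>l\<in>{0..<n}. (if j = l then a else 0) * (if l' = l then b else 0)) = (\<Sum>l\<in>{0..<n}. if l = j then (if l' = j then a * b else 0) else 0)"
    by (intro sum.cong) auto
  also have "\<dots> = (if l' = j then a * b else 0)" using assms by (cases "l' = j") (simp_all add: sum.delta)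
  finally show ?thesis .
qed

lemma sum_if_c: "(\<Sum>k\<in>A. if c then f k else (0::real)) = (if c then (\<Sum>k\<in>A. f k) else 0)"
  by (cases c) simp_all

definition X2 :: "nat \<Rightarrow> real mat \<Rightarrow> real mat" where
  "X2 n X = mat (length (wedge_pairs n)) (dim_col X * n) (\<lambda>(a,c).
     case wedge_pairs n ! a of (i,j) \<Rightarrow>
       (if j = c mod n then X $$ (i, c div n) else 0) - (if i = c mod n then X $$ (j, c div n) else 0))"

definition Y2 :: "nat \<Rightarrow> real mat \<Rightarrow> real mat" where
  "Y2 n Y = mat (dim_row Y * n) (length (wedge_pairs n)) (\<lambda>(c,b).
     case wedge_pairs n ! b of (i,j) \<Rightarrow>
       (if j = c mod n then Y $$ (c div n, i) else 0) - (if i = c mod n then Y $$ (c div n, j) else 0))"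

lemma compound2_factor:
  assumes X: "X \<in> carrier_mat n q" and Y: "Y \<in> carrier_mat q n"
  shows "compound2 (X * Y) = X2 n X * Y2 n Y"
proof (rule eq_matI)
  let ?ps = "wedge_pairs n"
  have dXY: "dim_row (X * Y) = n" using X by simp
  show "dim_row (compound2 (X * Y)) = dim_row (X2 n X * Y2 n Y)"
    "dim_col (compound2 (X * Y)) = dim_col (X2 n X * Y2 n Y)"
    unfolding compound2_def Let_def dXY X2_def Y2_def by auto
  fix a b assume a: "a < dim_row (X2 n X * Y2 n Y)" and b: "b < dim_col (X2 n X * Y2 n Y)"
  then have a: "a < length ?ps" and b: "b < length ?ps" by (auto simp: X2_def Y2_def)
  obtain i j where ij: "?ps ! a = (i,j)" by force
  obtain k' l' where kl: "?ps ! b = (k',l')" by force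
  have ijn: "i < j" "j < n" using wedge_pairs_nth[OF a] ij by auto
  have kln: "k' < l'" "l' < n" using wedge_pairs_nth[OF b] kl by auto
  have "(X2 n X * Y2 n Y) $$ (a,b) = (\<Sum>c\<in>{0..<q*n}. X2 n X $$ (a,c) * Y2 n Y $$ (c,b))"
    using a b X Y by (simp add: X2_def Y2_def scalar_prod_def)
  also have "\<dots> = (\<Sum>k\<in>{0..<q}. \<Sum>l\<in>{0..<n}. X2 n X $$ (a,k*n+l) * Y2 n Y $$ (k*n+l,b))"
    by (rule sum_prod_index)
  also have "\<dots> = (\<Sum>k\<in>{0..<q}. \<Sum>l\<in>{0..<n}.
      ((if j = l then X $$ (i,k) else 0) - (if i = l then X $$ (j,k) else 0)) *
      ((if l' = l then Y $$ (k,k') else 0) - (if k' = l then Y $$ (k,l') else 0)))"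
  proof (intro sum.cong refl)
    fix k l assume k: "k \<in> {0..<q}" and l: "l \<in> {0..<n}"
    have lt: "k*n + l < q*n"
    proof -
      have "k*n + l < k*n + n" using l by simp
      also have "\<dots> = (Suc k)*n" by simp
      also have "\<dots> \<le> q*n" using k by (intro mult_right_mono) auto
      finally show ?thesis .
    qed
    have dm: "(k*n+l) div n = k" "(k*n+l) mod n = l" "l mod n = l" using l by auto
    show "X2 n X $$ (a,k*n+l) * Y2 n Y $$ (k*n+l,b) =
      ((if j = l then X $$ (i,k) else 0) - (if i = l then X $$ (j,k) else 0)) *
      ((if l' = l then Y $$ (k,k') else 0) - (if k' = l then Y $$ (k,l') else 0))"
      using a b lt X Y unfolding X2_def Y2_def by (simp add: ij kl dm)
  qed
  also have "\<dots> = (\<Sum>k\<in>{0..<q}.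
      (if l' = j then X $$ (i,k) * Y $$ (k,k') else 0) - (if k' = j then X $$ (i,k) * Y $$ (k,l') else 0)
      - (if l' = i then X $$ (j,k) * Y $$ (k,k') else 0) + (if k' = i then X $$ (j,k) * Y $$ (k,l') else 0))"
  proof (intro sum.cong refl)
    fix k
    let ?xi = "X $$ (i,k)" and ?xj = "X $$ (j,k)" and ?yk = "Y $$ (k,k')" and ?yl = "Y $$ (k,l')"
    have e: "\<And>l. ((if j = l then ?xi else 0) - (if i = l then ?xj else 0)) *
      ((if l' = l then ?yk else 0) - (if k' = l then ?yl else 0)) =
      (if j = l then ?xi else 0) * (if l' = l then ?yk else 0) - (if j = l then ?xi else 0) * (if k' = l then ?yl else 0)
      - (if i = l then ?xj else 0) * (if l' = l then ?yk else 0) + (if i = l then ?xj else 0) * (if k' = l then ?yl else 0)"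
      by (simp add: algebra_simps)
    show "(\<Sum>l\<in>{0..<n}. ((if j = l then ?xi else 0) - (if i = l then ?xj else 0)) *
      ((if l' = l then ?yk else 0) - (if k' = l then ?yl else 0))) =
      (if l' = j then ?xi * ?yk else 0) - (if k' = j then ?xi * ?yl else 0)
      - (if l' = i then ?xj * ?yk else 0) + (if k' = i then ?xj * ?yl else 0)"
      unfolding e sum.distrib sum_subtractf using ijn
      by (simp only: sum_ifif)
  qed
  also have "\<dots> = (if l' = j then (\<Sum>k\<in>{0..<q}. X $$ (i,k) * Y $$ (k,k')) else 0)
      - (if k' = j then (\<Sum>k\<in>{0..<q}. X $$ (i,k) * Y $$ (k,l')) else 0)
      - (if l' = i then (\<Sum>k\<in>{0..<q}. X $$ (j,k) * Y $$ (k,k')) else 0)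
      + (if k' = i then (\<Sum>k\<in>{0..<q}. X $$ (j,k) * Y $$ (k,l')) else 0)"
    unfolding sum.distrib sum_subtractf by (simp add: sum_if_c)
  also have "\<dots> = (if l' = j then (X * Y) $$ (i,k') else 0) - (if l' = i then (X * Y) $$ (j,k') else 0)
        + (if k' = i then (X * Y) $$ (j,l') else 0) - (if k' = j then (X * Y) $$ (i,l') else 0)"
    using X Y ijn kln by (simp add: scalar_prod_def)
  also have "\<dots> = compound2 (X * Y) $$ (a,b)"
    using a b unfolding compound2_def Let_def dXY by (simp add: ij kl)
  finally show "compound2 (X * Y) $$ (a,b) = (X2 n X * Y2 n Y) $$ (a,b)" by simp
qed



lemma HH_compound:
  assumes H: "HH X Y n q"
  shows "HH (X2 n X) (Y2 n Y) (length (wedge_pairs n)) (q*n)"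
proof -
  let ?ps = "wedge_pairs n" and ?N = "length (wedge_pairs n)"
  have X: "X \<in> carrier_mat n q" and Y: "Y \<in> carrier_mat q n"
    and ent: "\<And>i k. i<n \<Longrightarrow> k<q \<Longrightarrow> X $$ (i,k) \<in> {0,1,-1}"
    and cnt: "\<And>k. k<q \<Longrightarrow> card {i. i<n \<and> X $$ (i,k) \<noteq> 0} \<le> 2"
    and sg: "\<And>k i. k<q \<Longrightarrow> i<n \<Longrightarrow> sgn (Y $$ (k,i)) \<in> {0, sgn (X $$ (i,k))}"
    using H unfolding HH_def by auto
  have cdm: "c div n < q" "c mod n < n" if "c < q*n" for c
  proof -
    have "n > 0" using that by (cases n) auto
    then show "c mod n < n" by simp
    show "c div n < q" using that by (metis div_less_iff_less_mult \<open>n > 0\<close>)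
  qed
  have X2e: "X2 n X $$ (a,c) = (case ?ps ! a of (i,j) \<Rightarrow>
       (if j = c mod n then X $$ (i, c div n) else 0) - (if i = c mod n then X $$ (j, c div n) else 0))"
    if "a < ?N" "c < q*n" for a c
    using that X unfolding X2_def by simp
  have Y2e: "Y2 n Y $$ (c,b) = (case ?ps ! b of (i,j) \<Rightarrow>
       (if j = c mod n then Y $$ (c div n, i) else 0) - (if i = c mod n then Y $$ (c div n, j) else 0))"
    if "b < ?N" "c < q*n" for b c
    using that Y unfolding Y2_def by simp
  show ?thesis unfolding HH_def
  proof (intro conjI allI impI)
    show "X2 n X \<in> carrier_mat ?N (q*n)" using X unfolding X2_def by auto
    show "Y2 n Y \<in> carrier_mat (q*n) ?N" using Y unfolding Y2_def by auto
  next
    fix a c assume a: "a < ?N" and c: "c < q*n"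
    obtain i j where ij: "?ps ! a = (i,j)" by force
    have ijn: "i < j" "j < n" using wedge_pairs_nth[OF a] ij by auto
    show "X2 n X $$ (a,c) \<in> {0,1,-1}"
      using ent[OF _ cdm(1)[OF c], of i] ent[OF _ cdm(1)[OF c], of j] ijn
      unfolding X2e[OF a c] ij by auto
  next
    fix c b assume c: "c < q*n" and b: "b < ?N"
    obtain i j where ij: "?ps ! b = (i,j)" by force
    have ijn: "i < j" "j < n" using wedge_pairs_nth[OF b] ij by auto
    have s1: "sgn (Y $$ (c div n, i)) \<in> {0, sgn (X $$ (i, c div n))}" using sg cdm[OF c] ijn by auto
    have s2: "sgn (Y $$ (c div n, j)) \<in> {0, sgn (X $$ (j, c div n))}" using sg cdm[OF c] ijn by auto
    show "sgn (Y2 n Y $$ (c,b)) \<in> {0, sgn (X2 n X $$ (b,c))}"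
      unfolding X2e[OF b c] Y2e[OF b c] ij using s1 s2 ijn
      by (auto simp: sgn_minus)
  next
    fix c assume c: "c < q*n"
    define k where "k = c div n"
    define l where "l = c mod n"
    have k: "k < q" and l: "l < n" using cdm[OF c] k_def l_def by auto
    define P where "P = (\<lambda>(i,j). (if j = l then X $$ (i, k) else 0) - (if i = l then X $$ (j, k) else 0) \<noteq> 0)"
    have "{a. a < ?N \<and> X2 n X $$ (a,c) \<noteq> 0} = {a. a < ?N \<and> P (?ps ! a)}"
    proof (intro Collect_cong)
      fix a
      show "(a < ?N \<and> X2 n X $$ (a,c) \<noteq> 0) = (a < ?N \<and> P (?ps ! a))"
      proof (cases "a < ?N")
        case True
        obtain i j where ij: "?ps ! a = (i,j)" by force
        show ?thesis using True c unfolding X2e[OF True c] ij P_def k_def l_def by simp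
      qed simp
    qed
    then have "card {a. a < ?N \<and> X2 n X $$ (a,c) \<noteq> 0} = card {x\<in>set ?ps. P x}"
      using card_nth_distinct[OF distinct_wedge_pairs, of n P] by simp
    also have "\<dots> \<le> card ((\<lambda>r. (min r l, max r l)) ` {r. r<n \<and> X $$ (r,k) \<noteq> 0})"
    proof (rule card_mono)
      show "finite ((\<lambda>r. (min r l, max r l)) ` {r. r<n \<and> X $$ (r,k) \<noteq> 0})" by auto
      show "{x\<in>set ?ps. P x} \<subseteq> (\<lambda>r. (min r l, max r l)) ` {r. r<n \<and> X $$ (r,k) \<noteq> 0}"
      proof
        fix x assume x: "x \<in> {x\<in>set ?ps. P x}"
        then obtain i j where xij: "x = (i,j)" "i < j" "j < n" "P (i,j)" unfolding set_wedge_pairs by auto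
        show "x \<in> (\<lambda>r. (min r l, max r l)) ` {r. r<n \<and> X $$ (r,k) \<noteq> 0}"
        proof (cases "j = l")
          case True
          then have "X $$ (i,k) \<noteq> 0" using xij unfolding P_def by auto
          then show ?thesis using xij True by (intro image_eqI[of _ _ i]) auto
        next
          case False
          then have "i = l" "X $$ (j,k) \<noteq> 0" using xij unfolding P_def by (auto split: if_splits)
          then show ?thesis using xij by (intro image_eqI[of _ _ j]) auto
        qed
      qed
    qed
    also have "\<dots> \<le> card {r. r<n \<and> X $$ (r,k) \<noteq> 0}" by (rule card_image_le) auto
    also have "\<dots> \<le> 2" by (rule cnt[OF k])
    finally show "card {a. a < ?N \<and> X2 n X $$ (a,c) \<noteq> 0} \<le> 2" .
  qed
qed

lemma HH_compound_P0:
  assumes H: "HH X Y n q"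
  shows "P0_matrix (compound2 (X * Y))"
proof -
  have X: "X \<in> carrier_mat n q" and Y: "Y \<in> carrier_mat q n" using H unfolding HH_def by auto
  show ?thesis unfolding compound2_factor[OF X Y] by (rule HH_P0[OF HH_compound[OF H]])
qed

lemma HH_compound_shift:
  assumes H: "HH X Y n q" and t: "t > 0"
  shows "det (compound2 (X * Y) + t \<cdot>\<^sub>m 1\<^sub>m (length (wedge_pairs n))) > 0"
proof -
  have X: "X \<in> carrier_mat n q" and Y: "Y \<in> carrier_mat q n" using H unfolding HH_def by auto
  show ?thesis unfolding compound2_factor[OF X Y] by (rule HH_shift_pos[OF HH_compound[OF H] t])
qed



lemma no_neg_real_eig:
  fixes K :: "real mat"
  assumes K: "K \<in> carrier_mat m m" and t: "det (K + t \<cdot>\<^sub>m 1\<^sub>m m) \<noteq> 0"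
  shows "\<not> eigenvalue (map_mat complex_of_real K) (complex_of_real (- t))"
proof
  assume ev: "eigenvalue (map_mat complex_of_real K) (complex_of_real (- t))"
  have Kc: "map_mat complex_of_real K \<in> carrier_mat m m" using K by simp
  have "char_matrix (map_mat complex_of_real K) (complex_of_real (- t)) = map_mat complex_of_real (K + t \<cdot>\<^sub>m 1\<^sub>m m)"
    using K unfolding char_matrix_def by (intro eq_matI) auto
  then have "det (map_mat complex_of_real (K + t \<cdot>\<^sub>m 1\<^sub>m m)) = 0"
    using ev eigenvalue_det[OF Kc] by simp
  then have "complex_of_real (det (K + t \<cdot>\<^sub>m 1\<^sub>m m)) = 0" by (simp add: of_real_hom.hom_det)
  with t show False by simp
qed

definition wdg :: "nat \<Rightarrow> complex vec \<Rightarrow> complex vec \<Rightarrow> complex vec" where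
  "wdg n u v = vec (length (wedge_pairs n)) (\<lambda>a. case wedge_pairs n ! a of (i,j) \<Rightarrow> u $ i * v $ j - u $ j * v $ i)"

lemma pair_sum_split:
  fixes G :: "nat \<Rightarrow> nat \<Rightarrow> complex"
  assumes diag: "\<And>k. k < n \<Longrightarrow> G k k = 0"
  shows "(\<Sum>(k,l)\<in>{(k,l). k < l \<and> l < n}. G k l + G l k) = (\<Sum>k\<in>{0..<n}. \<Sum>l\<in>{0..<n}. G k l)"
proof -
  let ?A = "{(k,l). k < l \<and> l < n}" and ?B = "{(k,l). l < k \<and> k < n}" and ?D = "{(k,l). k = l \<and> l < n}"
  have finA: "finite ?A" by (rule finite_subset[of _ "{0..<n}\<times>{0..<n}"]) auto
  have finB: "finite ?B" by (rule finite_subset[of _ "{0..<n}\<times>{0..<n}"]) auto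
  have finD: "finite ?D" by (rule finite_subset[of _ "{0..<n}\<times>{0..<n}"]) auto
  have "(\<Sum>k\<in>{0..<n}. \<Sum>l\<in>{0..<n}. G k l) = (\<Sum>(k,l)\<in>{0..<n}\<times>{0..<n}. G k l)"
    by (rule sum.cartesian_product)
  also have "{0..<n}\<times>{0..<n} = ?A \<union> ?B \<union> ?D" by auto
  also have "(\<Sum>(k,l)\<in>?A \<union> ?B \<union> ?D. G k l) = (\<Sum>(k,l)\<in>?A. G k l) + (\<Sum>(k,l)\<in>?B. G k l) + (\<Sum>(k,l)\<in>?D. G k l)"
    using finA finB finD by (subst sum.union_disjoint, auto)+
  also have "(\<Sum>(k,l)\<in>?D. G k l) = 0" using diag by (intro sum.neutral) auto
  also have "(\<Sum>(k,l)\<in>?B. G k l) = (\<Sum>(k,l)\<in>?A. G l k)"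
  proof -
    have "(\<Sum>(k,l)\<in>?A. G l k) = (\<Sum>x\<in>prod.swap ` ?A. (\<lambda>(k,l). G k l) x)"
      by (subst sum.reindex) (auto simp: inj_on_def comp_def case_prod_beta)
    also have "prod.swap ` ?A = ?B" by force
    finally show ?thesis by simp
  qed
  finally have tot: "(\<Sum>k\<in>{0..<n}. \<Sum>l\<in>{0..<n}. G k l) = (\<Sum>(k,l)\<in>?A. G k l) + (\<Sum>(k,l)\<in>?A. G l k)"
    by (simp only: add_0_right)
  have e: "(\<Sum>(k,l)\<in>?A. G k l + G l k) = (\<Sum>(k,l)\<in>?A. G k l) + (\<Sum>(k,l)\<in>?A. G l k)"
    unfolding sum.distrib[symmetric] by (rule sum.cong) auto
  show ?thesis unfolding tot e by (rule refl)
qed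



lemma sum_if_cc: "(\<Sum>k\<in>A. if c then f k else (0::complex)) = (if c then (\<Sum>k\<in>A. f k) else 0)"
  by (cases c) simp_all

lemma wedge_action:
  fixes M :: "real mat" and u v :: "complex vec"
  assumes M: "M \<in> carrier_mat n n" and u: "u \<in> carrier_vec n" and v: "v \<in> carrier_vec n"
  shows "map_mat complex_of_real (compound2 M) *\<^sub>v wdg n u v =
    wdg n (map_mat complex_of_real M *\<^sub>v u) v + wdg n u (map_mat complex_of_real M *\<^sub>v v)"
proof (rule eq_vecI)
  let ?ps = "wedge_pairs n" and ?N = "length (wedge_pairs n)"
  let ?m = "\<lambda>x y. complex_of_real (M $$ (x,y))"
  have dM: "dim_row M = n" using M by simp
  have Cd: "compound2 M \<in> carrier_mat ?N ?N" unfolding compound2_def Let_def dM by simp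
  show "dim_vec (map_mat complex_of_real (compound2 M) *\<^sub>v wdg n u v) =
    dim_vec (wdg n (map_mat complex_of_real M *\<^sub>v u) v + wdg n u (map_mat complex_of_real M *\<^sub>v v))"
    using Cd by (simp add: wdg_def)
  fix a assume a: "a < dim_vec (wdg n (map_mat complex_of_real M *\<^sub>v u) v + wdg n u (map_mat complex_of_real M *\<^sub>v v))"
  then have a: "a < ?N" by (simp add: wdg_def)
  obtain i j where ij: "?ps ! a = (i,j)" by force
  have ijn: "i < j" "j < n" using wedge_pairs_nth[OF a] ij by auto
  define G where "G = (\<lambda>k l. (if l = j then ?m i k * u $ k * v $ l else 0) - (if l = i then ?m j k * u $ k * v $ l else 0)
     + (if k = i then ?m j l * u $ k * v $ l else 0) - (if k = j then ?m i l * u $ k * v $ l else 0))"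
  define H where "H = (\<lambda>(k,l). complex_of_real ((if l = j then M $$ (i,k) else 0) - (if l = i then M $$ (j,k) else 0)
     + (if k = i then M $$ (j,l) else 0) - (if k = j then M $$ (i,l) else 0)) * (u $ k * v $ l - u $ l * v $ k))"
  have "(map_mat complex_of_real (compound2 M) *\<^sub>v wdg n u v) $ a =
      (\<Sum>b\<in>{0..<?N}. complex_of_real (compound2 M $$ (a,b)) * wdg n u v $ b)"
    using a Cd by (simp add: scalar_prod_def wdg_def)
  also have "\<dots> = (\<Sum>b\<in>{0..<?N}. H (?ps ! b))"
  proof (intro sum.cong refl)
    fix b assume b: "b \<in> {0..<?N}"
    obtain k l where kl: "?ps ! b = (k,l)" by force
    show "complex_of_real (compound2 M $$ (a,b)) * wdg n u v $ b = H (?ps ! b)"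
      using a b unfolding compound2_def Let_def dM wdg_def by (simp add: ij kl H_def)
  qed
  also have "\<dots> = (\<Sum>x\<in>set ?ps. H x)" by (rule sum_nth_distinct[OF distinct_wedge_pairs])
  also have "\<dots> = (\<Sum>(k,l)\<in>{(k,l). k < l \<and> l < n}. G k l + G l k)"
    unfolding set_wedge_pairs by (intro sum.cong refl) (auto simp: H_def G_def algebra_simps)
  also have "\<dots> = (\<Sum>k\<in>{0..<n}. \<Sum>l\<in>{0..<n}. G k l)"
    by (rule pair_sum_split) (auto simp: G_def)
  also have "\<dots> = (\<Sum>k\<in>{0..<n}. ?m i k * u $ k * v $ j - ?m j k * u $ k * v $ i
       + (if k = i then (\<Sum>l\<in>{0..<n}. ?m j l * u $ k * v $ l) else 0)
       - (if k = j then (\<Sum>l\<in>{0..<n}. ?m i l * u $ k * v $ l) else 0))"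
    unfolding G_def using ijn
    by (intro sum.cong refl) (simp add: sum.distrib sum_subtractf sum_if_cc)
  also have "\<dots> = (\<Sum>k\<in>{0..<n}. ?m i k * u $ k) * v $ j - (\<Sum>k\<in>{0..<n}. ?m j k * u $ k) * v $ i
      + u $ i * (\<Sum>l\<in>{0..<n}. ?m j l * v $ l) - u $ j * (\<Sum>l\<in>{0..<n}. ?m i l * v $ l)"
    using ijn by (simp add: sum.distrib sum_subtractf sum_distrib_left sum_distrib_right algebra_simps)
  also have "\<dots> = (wdg n (map_mat complex_of_real M *\<^sub>v u) v + wdg n u (map_mat complex_of_real M *\<^sub>v v)) $ a"
    using a M u v ijn by (simp add: wdg_def ij scalar_prod_def algebra_simps)
  finally show "(map_mat complex_of_real (compound2 M) *\<^sub>v wdg n u v) $ a =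
    (wdg n (map_mat complex_of_real M *\<^sub>v u) v + wdg n u (map_mat complex_of_real M *\<^sub>v v)) $ a" .
qed



lemma semistable_crit:
  fixes M :: "real mat"
  assumes M: "M \<in> carrier_mat n n"
    and h1: "\<And>t. t > 0 \<Longrightarrow> det (M + t \<cdot>\<^sub>m 1\<^sub>m n) \<noteq> 0"
    and h2: "\<And>t. t > 0 \<Longrightarrow> det (compound2 M + t \<cdot>\<^sub>m 1\<^sub>m (length (wedge_pairs n))) \<noteq> 0"
  shows "pos_semistable M"
  unfolding pos_semistable_def
proof (intro conjI allI impI)
  show "dim_row M = dim_col M" using M by simp
  let ?Mc = "map_mat complex_of_real M"
  let ?ps = "wedge_pairs n" and ?N = "length (wedge_pairs n)"
  have dM: "dim_row M = n" using M by simp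
  have Cd: "compound2 M \<in> carrier_mat ?N ?N" unfolding compound2_def Let_def dM by simp
  have Mc: "?Mc \<in> carrier_mat n n" using M by simp
  fix z assume ev: "eigenvalue ?Mc z"
  show "0 \<le> Re z"
  proof (rule ccontr)
    assume neg: "\<not> 0 \<le> Re z"
    show False
    proof (cases "Im z = 0")
      case True
      then have zr: "z = complex_of_real (- (- Re z))" by (simp add: complex_eq_iff)
      have "\<not> eigenvalue ?Mc (complex_of_real (- (- Re z)))"
        by (rule no_neg_real_eig[OF M h1]) (use neg in auto)
      with ev zr show False by simp
    next
      case False
      from ev obtain v where v: "v \<in> carrier_vec n" "v \<noteq> 0\<^sub>v n" "?Mc *\<^sub>v v = z \<cdot>\<^sub>v v"
        unfolding eigenvalue_def eigenvector_def using M by auto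
      define vb where "vb = vec n (\<lambda>i. cnj (v $ i))"
      have vb: "vb \<in> carrier_vec n" unfolding vb_def by simp
      have Mvi: "(\<Sum>k\<in>{0..<n}. complex_of_real (M $$ (i,k)) * v $ k) = z * v $ i" if i: "i < n" for i
      proof -
        have "(?Mc *\<^sub>v v) $ i = (z \<cdot>\<^sub>v v) $ i" using v(3) by simp
        then show ?thesis using i M v(1) by (simp add: scalar_prod_def)
      qed
      have Mvb: "?Mc *\<^sub>v vb = cnj z \<cdot>\<^sub>v vb"
      proof (rule eq_vecI)
        fix i assume "i < dim_vec (cnj z \<cdot>\<^sub>v vb)"
        then have i: "i < n" by (simp add: vb_def)
        have "(?Mc *\<^sub>v vb) $ i = (\<Sum>k\<in>{0..<n}. complex_of_real (M $$ (i,k)) * cnj (v $ k))"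
          using i M by (simp add: scalar_prod_def vb_def)
        also have "\<dots> = cnj (\<Sum>k\<in>{0..<n}. complex_of_real (M $$ (i,k)) * v $ k)"
          by (simp add: cnj_sum)
        also have "\<dots> = cnj z * cnj (v $ i)" using Mvi[OF i] by simp
        finally show "(?Mc *\<^sub>v vb) $ i = (cnj z \<cdot>\<^sub>v vb) $ i" using i by (simp add: vb_def)
      qed (use M in \<open>simp add: vb_def\<close>)
      define w where "w = wdg n v vb"
      have w: "w \<in> carrier_vec ?N" unfolding w_def wdg_def by simp
      have act: "map_mat complex_of_real (compound2 M) *\<^sub>v w = (z + cnj z) \<cdot>\<^sub>v w"
        unfolding w_def wedge_action[OF M v(1) vb] v(3) Mvb
      proof (rule eq_vecI)
        fix a assume "a < dim_vec ((z + cnj z) \<cdot>\<^sub>v wdg n v vb)"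
        then have a: "a < ?N" by (simp add: wdg_def)
        obtain i j where ij: "?ps ! a = (i,j)" by force
        have ijn: "i < n" "j < n" using wedge_pairs_nth[OF a] ij by auto
        show "(wdg n (z \<cdot>\<^sub>v v) vb + wdg n v (cnj z \<cdot>\<^sub>v vb)) $ a = ((z + cnj z) \<cdot>\<^sub>v wdg n v vb) $ a"
          using a ijn v(1) vb by (simp add: wdg_def ij algebra_simps)
      qed (simp add: wdg_def)
      have wnz: "w \<noteq> 0\<^sub>v ?N"
      proof
        assume w0: "w = 0\<^sub>v ?N"
        have sym: "v $ i * cnj (v $ j) = v $ j * cnj (v $ i)" if "i < n" "j < n" for i j
        proof -
          have lt: "v $ i * cnj (v $ j) = v $ j * cnj (v $ i)" if "i < j" "j < n" for i j
          proof -
            have "(i,j) \<in> set ?ps" unfolding set_wedge_pairs using that by auto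
            then obtain a where a: "a < ?N" "?ps ! a = (i,j)" by (auto simp: in_set_conv_nth)
            have "w $ a = 0" using w0 a by simp
            then show ?thesis using a that unfolding w_def wdg_def vb_def by simp
          qed
          show ?thesis
          proof (cases i j rule: linorder_cases)
            case less then show ?thesis using lt that by auto
          next
            case greater then show ?thesis using lt[of j i] that by auto
          qed simp
        qed
        obtain k where k: "k < n" "v $ k \<noteq> 0"
        proof -
          have "\<exists>k<n. v $ k \<noteq> 0"
          proof (rule ccontr)
            assume "\<not> (\<exists>k<n. v $ k \<noteq> 0)"
            then have "v = 0\<^sub>v n" using v(1) by (intro eq_vecI) auto
            with v(2) show False by simp
          qed
          then show ?thesis using that by blast
        qed
        define c where "c = v $ k / cnj (v $ k)"
        have vc: "v $ l = c * cnj (v $ l)" if "l < n" for l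
          using sym[OF that k(1)] k(2) unfolding c_def by (simp add: field_simps)
        have "z * v $ k = (\<Sum>l\<in>{0..<n}. complex_of_real (M $$ (k,l)) * v $ l)" using Mvi[OF k(1)] by simp
        also have "\<dots> = c * (\<Sum>l\<in>{0..<n}. complex_of_real (M $$ (k,l)) * cnj (v $ l))"
          unfolding sum_distrib_left
        proof (intro sum.cong refl)
          fix l assume "l \<in> {0..<n}"
          then have e: "v $ l = c * cnj (v $ l)" using vc by simp
          show "complex_of_real (M $$ (k,l)) * v $ l = c * (complex_of_real (M $$ (k,l)) * cnj (v $ l))"
            by (subst e) (simp only: ac_simps)
        qed
        also have "(\<Sum>l\<in>{0..<n}. complex_of_real (M $$ (k,l)) * cnj (v $ l)) = cnj (z * v $ k)"
        proof -
          have "(\<Sum>l\<in>{0..<n}. complex_of_real (M $$ (k,l)) * cnj (v $ l)) = cnj (\<Sum>l\<in>{0..<n}. complex_of_real (M $$ (k,l)) * v $ l)"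
            by (simp add: cnj_sum)
          also have "\<dots> = cnj (z * v $ k)" using Mvi[OF k(1)] by simp
          finally show ?thesis .
        qed
        also have "c * cnj (z * v $ k) = cnj z * (c * cnj (v $ k))" by (simp only: complex_cnj_mult ac_simps)
        also have "c * cnj (v $ k) = v $ k" using vc[OF k(1), symmetric] .
        finally have "z * v $ k = cnj z * v $ k" .
        then have zc: "z = cnj z" using k(2) by simp
        have "Im z = Im (cnj z)" by (rule arg_cong[OF zc])
        then have "Im z = 0" by simp
        with False show False by simp
      qed
      have "eigenvalue (map_mat complex_of_real (compound2 M)) (z + cnj z)"
        unfolding eigenvalue_def eigenvector_def using act w wnz Cd by auto
      moreover have "z + cnj z = complex_of_real (- (- 2 * Re z))" by (simp add: complex_eq_iff)
      moreover have "\<not> eigenvalue (map_mat complex_of_real (compound2 M)) (complex_of_real (- (- 2 * Re z)))"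
        by (rule no_neg_real_eig[OF Cd h2]) (use neg in auto)
      ultimately show False by simp
    qed
  qed
qed



lemma HH_semistable:
  assumes H: "HH X Y p q"
  shows "pos_semistable (X * Y)"
proof -
  have X: "X \<in> carrier_mat p q" and Y: "Y \<in> carrier_mat q p" using H unfolding HH_def by auto
  show ?thesis
  proof (rule semistable_crit)
    show "X * Y \<in> carrier_mat p p" using X Y by auto
    fix t :: real assume t: "t > 0"
    show "det (X * Y + t \<cdot>\<^sub>m 1\<^sub>m p) \<noteq> 0" using HH_shift_pos[OF H t] by simp
    show "det (compound2 (X * Y) + t \<cdot>\<^sub>m 1\<^sub>m (length (wedge_pairs p))) \<noteq> 0"
      using HH_compound_shift[OF H t] by simp
  qed
qed

lemma eigenvalue_transpose:
  fixes K :: "complex mat"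
  assumes K: "K \<in> carrier_mat n n" and ev: "eigenvalue K z"
  shows "eigenvalue (transpose_mat K) z"
proof -
  have KT: "transpose_mat K \<in> carrier_mat n n" using K by simp
  have "char_matrix (transpose_mat K) z = transpose_mat (char_matrix K z)"
    using K unfolding char_matrix_def by (intro eq_matI) auto
  then have "det (char_matrix (transpose_mat K) z) = det (char_matrix K z)"
    using det_transpose[of "char_matrix K z" n] K by simp
  then show ?thesis using ev eigenvalue_det[OF K] eigenvalue_det[OF KT] by simp
qed

lemma semistable_swap:
  fixes A B :: "real mat"
  assumes A: "A \<in> carrier_mat n m" and B: "B \<in> carrier_mat m n"
    and ss: "pos_semistable (transpose_mat A * transpose_mat B)"
  shows "pos_semistable (A * B)"
  unfolding pos_semistable_def
proof (intro conjI allI impI)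
  show "dim_row (A * B) = dim_col (A * B)" using A B by simp
  let ?h = "map_mat complex_of_real"
  fix z assume ev: "eigenvalue (?h (A * B)) z"
  show "0 \<le> Re z"
  proof (cases "z = 0")
    case True then show ?thesis by simp
  next
    case False
    have Ac: "?h A \<in> carrier_mat n m" and Bc: "?h B \<in> carrier_mat m n" using A B by auto
    have hAB: "?h (A * B) = ?h A * ?h B" by (rule of_real_hom.mat_hom_mult[OF A B])
    have hBA: "?h (B * A) = ?h B * ?h A" by (rule of_real_hom.mat_hom_mult[OF B A])
    from ev obtain v where v: "v \<in> carrier_vec n" "v \<noteq> 0\<^sub>v n" "?h (A * B) *\<^sub>v v = z \<cdot>\<^sub>v v"
      unfolding eigenvalue_def eigenvector_def using A B by auto
    define u where "u = ?h B *\<^sub>v v"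
    have u: "u \<in> carrier_vec m" unfolding u_def using Bc v(1) by simp
    have Au: "?h A *\<^sub>v u = z \<cdot>\<^sub>v v" using v(3) Ac Bc v(1) unfolding hAB u_def by simp
    have unz: "u \<noteq> 0\<^sub>v m"
    proof
      assume u0: "u = 0\<^sub>v m"
      have "v $ i = 0" if i: "i < n" for i
      proof -
        have "(?h A *\<^sub>v u) $ i = 0" using u0 Ac i by simp
        moreover have "(?h A *\<^sub>v u) $ i = z * v $ i" using Au i v(1) by simp
        ultimately show ?thesis using False by simp
      qed
      then have "v = 0\<^sub>v n" using v(1) by (intro eq_vecI) auto
      with v(2) show False by simp
    qed
    have "?h (B * A) *\<^sub>v u = z \<cdot>\<^sub>v u"
    proof -
      have "?h (B * A) *\<^sub>v u = ?h B *\<^sub>v (?h A *\<^sub>v u)" unfolding hBA using Ac Bc u by simp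
      also have "\<dots> = ?h B *\<^sub>v (z \<cdot>\<^sub>v v)" by (simp add: Au)
      also have "\<dots> = z \<cdot>\<^sub>v u" unfolding u_def using Bc v(1) by (simp add: mult_mat_vec)
      finally show ?thesis .
    qed
    then have evBA: "eigenvalue (?h (B * A)) z"
      unfolding eigenvalue_def eigenvector_def using u unz A B by auto
    have BAc: "?h (B * A) \<in> carrier_mat m m" using A B by simp
    have "eigenvalue (transpose_mat (?h (B * A))) z" by (rule eigenvalue_transpose[OF BAc evBA])
    moreover have "transpose_mat (?h (B * A)) = ?h (transpose_mat A * transpose_mat B)"
      using transpose_mult[OF B A] by (simp add: map_mat_transpose)
    ultimately show ?thesis using ss unfolding pos_semistable_def by simp
  qed
qed



lemma in_Q0_facts:
  assumes dimA: "A \<in> carrier_mat n m" and B: "in_Q0 B (transpose_mat A)"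
  shows "B \<in> carrier_mat m n" "\<And>i j. i < m \<Longrightarrow> j < n \<Longrightarrow> sgn (B $$ (i,j)) \<in> {0, sgn (A $$ (j,i))}"
proof -
  have dT: "dim_row (transpose_mat A) = m" "dim_col (transpose_mat A) = n" using dimA by auto
  have Q: "dim_row B = m" "dim_col B = n"
    "\<forall>i < m. \<forall>j < n. sgn (B $$ (i,j)) \<in> {0, sgn (transpose_mat A $$ (i,j))}"
    using B unfolding in_Q0_def dT by blast+
  show "B \<in> carrier_mat m n" using Q(1,2) by (rule carrier_matI)
  fix i j assume i: "i < m" and j: "j < n"
  have "transpose_mat A $$ (i,j) = A $$ (j,i)" using dimA i j by simp
  then show "sgn (B $$ (i,j)) \<in> {0, sgn (A $$ (j,i))}" using Q(3) i j by metis
qed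

theorem proposition4p2:
  fixes A :: "real mat" and n m :: nat
  assumes dimA: "A \<in> carrier_mat n m"
    and entries: "\<forall>i < n. \<forall>j < m. A $$ (i,j) \<in> {0, 1, -1}"
    and n2: "n \<ge> 2"
  shows "((\<forall>j < m. card {i. i < n \<and> A $$ (i,j) \<noteq> 0} \<le> 2) \<longrightarrow>
            (\<forall>B. in_Q0 B (transpose_mat A) \<longrightarrow>
               P0_matrix (A * B) \<and> P0_matrix (compound2 (A * B)) \<and> pos_semistable (A * B)))
       \<and> ((\<forall>i < n. card {j. j < m \<and> A $$ (i,j) \<noteq> 0} \<le> 2) \<longrightarrow>
            (\<forall>B. in_Q0 B (transpose_mat A) \<longrightarrow> pos_semistable (A * B)))"
proof (intro conjI impI allI)
  fix B assume cols: "\<forall>j < m. card {i. i < n \<and> A $$ (i,j) \<noteq> 0} \<le> 2" and B: "in_Q0 B (transpose_mat A)"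
  note Bf = in_Q0_facts[OF dimA B]
  have H: "HH A B n m"
    unfolding HH_def
  proof (intro conjI allI impI dimA Bf(1))
    fix i k assume "i < n" "k < m"
    then show "A $$ (i,k) \<in> {0,1,-1}" using entries by blast
  next
    fix k assume "k < m"
    then show "card {i. i < n \<and> A $$ (i,k) \<noteq> 0} \<le> 2" using cols by blast
  next
    fix k i assume "k < m" "i < n"
    then show "sgn (B $$ (k,i)) \<in> {0, sgn (A $$ (i,k))}" by (rule Bf(2))
  qed
  show "P0_matrix (A * B)" by (rule HH_P0[OF H])
  show "P0_matrix (compound2 (A * B))" by (rule HH_compound_P0[OF H])
  show "pos_semistable (A * B)" by (rule HH_semistable[OF H])
next
  fix B assume rows: "\<forall>i < n. card {j. j < m \<and> A $$ (i,j) \<noteq> 0} \<le> 2" and B: "in_Q0 B (transpose_mat A)"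
  note Bf = in_Q0_facts[OF dimA B]
  have H: "HH (transpose_mat A) (transpose_mat B) m n"
    unfolding HH_def
  proof (intro conjI allI impI)
    show "transpose_mat A \<in> carrier_mat m n" "transpose_mat B \<in> carrier_mat n m" using dimA Bf(1) by auto
    fix i k assume "i < m" "k < n"
    then show "transpose_mat A $$ (i,k) \<in> {0,1,-1}" using entries dimA by simp
  next
    fix k i assume k: "k < n" and i: "i < m"
    have "transpose_mat B $$ (k,i) = B $$ (i,k)" "transpose_mat A $$ (i,k) = A $$ (k,i)"
      using Bf(1) dimA k i by auto
    then show "sgn (transpose_mat B $$ (k,i)) \<in> {0, sgn (transpose_mat A $$ (i,k))}"
      using Bf(2)[OF i k] by simp
  next
    fix k assume k: "k < n"
    have "{i. i < m \<and> transpose_mat A $$ (i,k) \<noteq> 0} = {j. j < m \<and> A $$ (k,j) \<noteq> 0}"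
      using dimA k by auto
    then show "card {i. i < m \<and> transpose_mat A $$ (i,k) \<noteq> 0} \<le> 2" using rows k by simp
  qed
  show "pos_semistable (A * B)"
    by (rule semistable_swap[OF dimA Bf(1) HH_semistable[OF H]])
qed

end
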